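(* Fix a state $s$. Let $\pi^t_s\in\Delta(\mathscr{A})\cap\operatorname{rint}\operatorname{dom}h$, let $\widehat Q^t_s,\widehat Q^{t-1}_s\in\mathbb{R}^{\mathscr{A}}$ be arbitrary vectors and $\eta^{t-1},\eta^t>0$. Let $$\tilde\pi_s=\arg\min_{\pi_s\in\Delta(\mathscr{A})}-\langle\widehat Q^t_s-\widehat Q^{t-1}_s,\pi_s\rangle+\tfrac1{\eta^{t-1}}D_h(\pi_s,\pi^t_s),$$ and define the Lazy PMD(+correction) objective $F_{\mathrm{lzc}}(\pi_s)=-\langle\widehat Q^t_s,\pi_s\rangle+\frac1{\eta^t}D_h(\pi_s,\tilde\pi_s)$ and the Lazy PMD(+momentum) objective $F_{\mathrm{mom}}(\pi_s)=-\langle\widehat Q^t_s+\frac{\eta^{t-1}}{\eta^t}(\widehat Q^t_s-\widehat Q^{t-1}_s),\pi_s\rangle+\frac1{\eta^t}D_h(\pi_s,\pi^t_s)$. Then for every $\pi_s\in\Delta(\mathscr{A})\cap\operatorname{dom}h$, $$F_{\mathrm{lzc}}(\pi_s)-F_{\mathrm{lzc}}(\tilde\pi_s)\ \le\ F_{\mathrm{mom}}(\pi_s)-F_{\mathrm{mom}}(\tilde\pi_s).$$ (This is the sense in which the solutions of Lazy PMD(+momentum) subsume those of Lazy PMD(+correction).)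
   Context: $\mathscr{A}$ is a finite action set and $\langle\cdot,\cdot\rangle$ the dot product on $\mathbb{R}^{\mathscr{A}}$. The mirror map $h:\mathbb{R}^{\mathscr{A}}\to\mathbb{R}\cup\{+\infty\}$ is of Legendre type (strictly convex and essentially smooth on $\operatorname{rint}\operatorname{dom}h$) with $\Delta(\mathscr{A})\cap\operatorname{rint}\operatorname{dom}h\neq\emptyset$; its Bregman divergence is $D_h(x,y)=h(x)-h(y)-\langle\nabla h(y),x-y\rangle$ for $x\in\operatorname{dom}h$, $y\in\operatorname{rint}\operatorname{dom}h$. For $q\in\mathbb{R}^{\mathscr{A}}$, $y\in\Delta(\mathscr{A})\cap\operatorname{rint}\operatorname{dom}h$ and $\eta>0$, the problem $\arg\min_{\pi\in\Delta(\mathscr{A})}-\langle q,\pi\rangle+\frac1\eta D_h(\pi,y)$ has a unique minimizer, lying in $\operatorname{rint}\operatorname{dom}h$. *)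

theory Defs
  imports "HOL-Analysis.Analysis"
begin

text \<open>Vectors in R^A are modelled as real^'a with 'a a finite type (the action set).
An extended-real-valued mirror map h : R^A -> R \<union> {+\<infinity>} is modelled by its
effective domain C = dom h together with its (real) values h on C.\<close>

definition prob_simplex :: "(real^'a::finite) set" where
  "prob_simplex = {p. (\<forall>a. 0 \<le> p $ a) \<and> (\<Sum>a\<in>UNIV. p $ a) = 1}"

definition strictly_convex_on :: "(real^'a::finite) set \<Rightarrow> (real^'a \<Rightarrow> real) \<Rightarrow> bool" where
  "strictly_convex_on S f \<longleftrightarrow>
     (\<forall>x\<in>S. \<forall>y\<in>S. \<forall>t::real. x \<noteq> y \<and> 0 < t \<and> t < 1 \<longrightarrow>
        f ((1 - t) *\<^sub>R x + t *\<^sub>R y) < (1 - t) * f x + t * f y)"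

text \<open>Gradient of h at y (meaningful where h is differentiable at y).\<close>
definition grad :: "(real^'a::finite \<Rightarrow> real) \<Rightarrow> real^'a \<Rightarrow> real^'a" where
  "grad h y = (THE g. GDERIV h y :> g)"

text \<open>Legendre type (Rockafellar, Sec. 26): h is a closed proper convex function which
is essentially smooth (int dom h nonempty, h differentiable on int dom h, and the gradient
norm blows up along sequences approaching the boundary of dom h) and strictly convex on
int dom h.\<close>
definition legendre :: "(real^'a::finite \<Rightarrow> real) \<Rightarrow> (real^'a) set \<Rightarrow> bool" where
  "legendre h C \<longleftrightarrow>
     convex C \<and> convex_on C h \<and>
     closed {(x, t). x \<in> C \<and> h x \<le> t} \<and>
     interior C \<noteq> {} \<and>
     (\<forall>y\<in>interior C. h differentiable (at y)) \<and>
     (\<forall>x z. (\<forall>k. x k \<in> interior C) \<longrightarrow> x \<longlonglongrightarrow> z \<longrightarrow> z \<in> frontier C \<longrightarrow>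
        filterlim (\<lambda>k. norm (grad h (x k))) at_top sequentially) \<and>
     strictly_convex_on (interior C) h"

definition bregman :: "(real^'a::finite \<Rightarrow> real) \<Rightarrow> real^'a \<Rightarrow> real^'a \<Rightarrow> real" where
  "bregman h x y = h x - h y - inner (grad h y) (x - y)"

end

theory Submission
  imports Defs
begin

lemma grad_works:
  fixes h :: "real^'a::finite \<Rightarrow> real"
  assumes "h differentiable (at y)"
  shows "GDERIV h y :> grad h y"
proof -
  obtain f' where f': "(h has_derivative f') (at y)"
    using assms differentiable_def by blast
  have lin: "linear f'" using f' has_derivative_linear by blast
  define D where "D = adjoint f' 1"
  have eq: "f' = (\<lambda>x. inner x D)"
    using adjoint_works[OF lin] unfolding D_def by (auto simp: fun_eq_iff)
  have G: "GDERIV h y :> D" unfolding gderiv_def using f' eq by simp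
  have "(THE g. GDERIV h y :> g) = D"
  proof (rule the_equality)
    fix g assume "GDERIV h y :> g"
    then have "(\<lambda>x. inner x g) = (\<lambda>x. inner x D)"
      using G unfolding gderiv_def using has_derivative_unique by blast
    then have "inner (g - D) g = inner (g - D) D" by metis
    then have "inner (g - D) (g - D) = 0" by (simp add: inner_diff_right)
    then show "g = D" by simp
  qed (rule G)
  then show ?thesis using G unfolding grad_def by simp
qed

theorem proposition4:
  fixes h :: "real^'a::finite \<Rightarrow> real" and C :: "(real^'a) set"
    and \<pi>t \<pi>tilde Qt Qprev :: "real^'a" and \<eta>prev \<eta>t :: real
  assumes leg: "legendre h C"
    and \<pi>t: "\<pi>t \<in> prob_simplex \<inter> rel_interior C"
    and \<eta>prev: "\<eta>prev > 0" and \<eta>t: "\<eta>t > 0"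
    and tilde_mem: "\<pi>tilde \<in> prob_simplex \<inter> rel_interior C"
    and tilde_min: "\<forall>p\<in>prob_simplex \<inter> C.
          - inner (Qt - Qprev) \<pi>tilde + (1 / \<eta>prev) * bregman h \<pi>tilde \<pi>t
          \<le> - inner (Qt - Qprev) p + (1 / \<eta>prev) * bregman h p \<pi>t"
  shows "\<forall>p\<in>prob_simplex \<inter> C.
     (let Flzc = (\<lambda>q. - inner Qt q + (1 / \<eta>t) * bregman h q \<pi>tilde);
          Fmom = (\<lambda>q. - inner (Qt + (\<eta>prev / \<eta>t) *\<^sub>R (Qt - Qprev)) q
                       + (1 / \<eta>t) * bregman h q \<pi>t)
      in Flzc p - Flzc \<pi>tilde \<le> Fmom p - Fmom \<pi>tilde)"
proof
  fix p assume p: "p \<in> prob_simplex \<inter> C"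
  define g where "g = Qt - Qprev"
  define d where "d = p - \<pi>tilde"
  define G where "G = grad h \<pi>tilde"
  define G0 where "G0 = grad h \<pi>t"
  have ri: "rel_interior C = interior C"
    using leg unfolding legendre_def by (simp add: rel_interior_nonempty_interior)
  have "h differentiable (at \<pi>tilde)"
    using leg tilde_mem ri unfolding legendre_def by auto
  then have GD: "GDERIV h \<pi>tilde :> G" unfolding G_def by (rule grad_works)
  have convC: "convex C" using leg unfolding legendre_def by simp
  have convS: "convex (prob_simplex :: (real^'a) set)"
    unfolding prob_simplex_def convex_def
    by (auto simp: sum.distrib sum_distrib_left[symmetric])
  have tC: "\<pi>tilde \<in> C" using tilde_mem rel_interior_subset by blast
  define \<psi> where "\<psi> = (\<lambda>s::real. - inner g (\<pi>tilde + s *\<^sub>R d) + (1 / \<eta>prev) *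
      bregman h (\<pi>tilde + s *\<^sub>R d) \<pi>t)"
  have hd: "((\<lambda>s. h (\<pi>tilde + s *\<^sub>R d)) has_real_derivative inner G d) (at 0)"
  proof -
    have a: "((\<lambda>s::real. \<pi>tilde + s *\<^sub>R d) has_derivative (\<lambda>s. s *\<^sub>R d)) (at 0)"
      by (auto intro!: derivative_eq_intros)
    have b: "(h has_derivative (\<lambda>x. inner x G)) (at (\<pi>tilde + 0 *\<^sub>R d))"
      using GD unfolding gderiv_def by simp
    have "((\<lambda>s. h (\<pi>tilde + s *\<^sub>R d)) has_derivative (\<lambda>s. inner (s *\<^sub>R d) G)) (at 0)"
      using has_derivative_compose[OF a b] by (simp add: o_def)
    then show ?thesis unfolding has_field_derivative_def
      by (simp add: inner_commute mult.commute[of _ "inner G d"] fun_eq_iff)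
  qed
  have dpsi: "(\<psi> has_real_derivative (- inner g d + (1/\<eta>prev) * (inner G d - inner G0 d))) (at 0)"
    unfolding \<psi>_def bregman_def G0_def[symmetric]
    using \<eta>prev by (auto intro!: derivative_eq_intros hd simp: inner_add_right inner_diff_right algebra_simps)
  have min: "\<psi> 0 \<le> \<psi> s" if "0 < s" "s \<le> 1" for s
  proof -
    have "\<pi>tilde + s *\<^sub>R d = (1 - s) *\<^sub>R \<pi>tilde + s *\<^sub>R p"
      unfolding d_def by (simp add: algebra_simps)
    moreover have "(1 - s) *\<^sub>R \<pi>tilde + s *\<^sub>R p \<in> prob_simplex \<inter> C"
      using convC convS p tC tilde_mem that unfolding convex_def by auto
    ultimately show ?thesis using tilde_min unfolding \<psi>_def g_def by auto
  qed
  have opt: "0 \<le> - inner g d + (1/\<eta>prev) * (inner G d - inner G0 d)"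
  proof (rule ccontr)
    assume "\<not> ?thesis"
    then obtain e where e: "e > 0" "\<forall>s>0. s < e \<longrightarrow> \<psi> 0 > \<psi> (0 + s)"
      using DERIV_neg_dec_right[OF dpsi] by force
    define s where "s = min (e/2) 1"
    have "0 < s" "s < e" "s \<le> 1" using e unfolding s_def by auto
    then show False using e min[of s] by auto
  qed
  have opt2: "\<eta>prev * inner g d \<le> inner G d - inner G0 d"
    using opt \<eta>prev by (simp add: field_simps)
  show "let Flzc = (\<lambda>q. - inner Qt q + (1 / \<eta>t) * bregman h q \<pi>tilde);
          Fmom = (\<lambda>q. - inner (Qt + (\<eta>prev / \<eta>t) *\<^sub>R (Qt - Qprev)) q
                       + (1 / \<eta>t) * bregman h q \<pi>t)
      in Flzc p - Flzc \<pi>tilde \<le> Fmom p - Fmom \<pi>tilde"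
  proof -
    have key: "bregman h p \<pi>tilde \<le> - \<eta>prev * inner g d + bregman h p \<pi>t - bregman h \<pi>tilde \<pi>t"
      using opt2 unfolding bregman_def G_def[symmetric] G0_def[symmetric] d_def
      by (simp add: inner_diff_right algebra_simps)
    have "(1/\<eta>t) * bregman h p \<pi>tilde \<le> (1/\<eta>t) * (- \<eta>prev * inner g d + bregman h p \<pi>t - bregman h \<pi>tilde \<pi>t)"
      using key \<eta>t by (simp add: divide_right_mono)
    moreover have e1: "(- inner Qt p + (1 / \<eta>t) * bregman h p \<pi>tilde) - (- inner Qt \<pi>tilde + (1 / \<eta>t) * bregman h \<pi>tilde \<pi>tilde)
        = - inner Qt d + (1/\<eta>t) * bregman h p \<pi>tilde"
      unfolding d_def by (simp add: bregman_def inner_diff_right)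
    moreover have e2: "(- inner (Qt + (\<eta>prev / \<eta>t) *\<^sub>R (Qt - Qprev)) p + (1 / \<eta>t) * bregman h p \<pi>t)
       - (- inner (Qt + (\<eta>prev / \<eta>t) *\<^sub>R (Qt - Qprev)) \<pi>tilde + (1 / \<eta>t) * bregman h \<pi>tilde \<pi>t)
       = - inner Qt d + (1/\<eta>t) * (- \<eta>prev * inner g d + bregman h p \<pi>t - bregman h \<pi>tilde \<pi>t)"
      unfolding d_def g_def by (simp add: inner_diff_right inner_add_left algebra_simps)
    ultimately show ?thesis unfolding Let_def by linarith
  qed
qed

end
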